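(* Let $N\ge2$, $\sigma=(\sigma_1,\dots,\sigma_N)'$ with $\sigma_i>0$. Let $R$ be the $(N-1)\times(N-1)$ tridiagonal matrix with $R_{ii}=1$, $R_{i,i+1}=R_{i+1,i}=-1/2$ (other entries $0$), let $A$ be the $(N-1)\times(N-1)$ tridiagonal matrix with $A_{ii}=\sigma_i^2+\sigma_{i+1}^2$, $A_{i,i+1}=A_{i+1,i}=-\sigma_{i+1}^2$ (other entries $0$), and let $\rho_{kl}$ denote the entries of $R^{-1}$. For $1\le k\le l\le N-1$ set $$c_{k,l}(\sigma)=\mathrm{tr}(R^{-1}A)-2\frac{(R^{-1}AR^{-1})_{kl}}{\rho_{kl}}.$$ Then: (i) $c_{k,l}(\sigma)\ge0$ for $2\le k\le l\le N-2$; (ii) $c_{1,l}(\sigma)=c_l(\sigma)$ for $1\le l\le N-1$; (iii) $c_{k,N-1}(\sigma)=c_{N-k}(\sigma^{\leftarrow})$ for $1\le k\le N-1$.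
   Context: For $\alpha=(\alpha_1,\dots,\alpha_M)'\in\mathbb{R}^M$ ($M\ge2$) and $l=1,\dots,M-1$: $c_l(\alpha)=-\frac{2(M-1)}{M}\alpha_1^2+\frac{2(M+1)}{M}\sum_{p=2}^l\alpha_p^2+\frac{2(M-1)(M-l)-4l}{(M-l)M}\sum_{p=l+1}^M\alpha_p^2$, and $\alpha^{\leftarrow}=(\alpha_M,\dots,\alpha_1)'$. Here $M=N$. (All entries $\rho_{kl}$ of $R^{-1}$ are positive.) *)

theory Defs
  imports "Jordan_Normal_Form.Gauss_Jordan_Elimination"
begin

(* Conventions: vectors sigma, alpha are functions nat => real indexed 1..N (resp. 1..M).
   Matrices are Jordan_Normal_Form matrices with 0-based indices; the paper's entry (i,j)
   (1-based) is the JNF entry (i-1, j-1). *)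

definition Rmat :: "nat \<Rightarrow> real mat" where
  "Rmat N = mat (N - 1) (N - 1)
     (\<lambda>(i, j). if i = j then 1 else if i + 1 = j \<or> j + 1 = i then - 1 / 2 else 0)"

definition Amat :: "nat \<Rightarrow> (nat \<Rightarrow> real) \<Rightarrow> real mat" where
  "Amat N \<sigma> = mat (N - 1) (N - 1)
     (\<lambda>(i, j). if i = j then (\<sigma> (i + 1))\<^sup>2 + (\<sigma> (i + 2))\<^sup>2
              else if i + 1 = j then - (\<sigma> (i + 2))\<^sup>2
              else if j + 1 = i then - (\<sigma> (j + 2))\<^sup>2
              else 0)"

definition mat_trace :: "real mat \<Rightarrow> real" where
  "mat_trace M = (\<Sum>i<dim_row M. M $$ (i, i))"

definition Rinv :: "nat \<Rightarrow> real mat" where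
  "Rinv N = the (mat_inverse (Rmat N))"

definition rho :: "nat \<Rightarrow> nat \<Rightarrow> nat \<Rightarrow> real" where
  "rho N k l = Rinv N $$ (k - 1, l - 1)"

definition ckl :: "nat \<Rightarrow> nat \<Rightarrow> nat \<Rightarrow> (nat \<Rightarrow> real) \<Rightarrow> real" where
  "ckl N k l \<sigma> = mat_trace (Rinv N * Amat N \<sigma>)
     - 2 * (Rinv N * Amat N \<sigma> * Rinv N) $$ (k - 1, l - 1) / rho N k l"

definition cl :: "nat \<Rightarrow> nat \<Rightarrow> (nat \<Rightarrow> real) \<Rightarrow> real" where
  "cl M l \<alpha> = - (2 * (real M - 1) / real M) * (\<alpha> 1)\<^sup>2
     + (2 * (real M + 1) / real M) * (\<Sum>p = 2..l. (\<alpha> p)\<^sup>2)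
     + ((2 * (real M - 1) * (real M - real l) - 4 * real l) / ((real M - real l) * real M))
         * (\<Sum>p = l + 1..M. (\<alpha> p)\<^sup>2)"

definition rev_vec :: "nat \<Rightarrow> (nat \<Rightarrow> real) \<Rightarrow> (nat \<Rightarrow> real)" where
  "rev_vec M \<alpha> = (\<lambda>p. \<alpha> (M + 1 - p))"

end

theory Submission
  imports Defs
begin

definition P :: "nat \<Rightarrow> nat \<Rightarrow> nat \<Rightarrow> real" where
  "P N a b = 2 * real (min a b) * (real N - real (max a b)) / real N"

lemma sum_ind: fixes n c t :: nat shows "(\<Sum>i<n. if i + c = t then g i else 0) = (if c \<le> t \<and> t - c < n then g (t - c) else (0::real))"
proof -
  have "(\<Sum>i<n. if i + c = t then g i else 0) = (\<Sum>i<n. if i = t - c then (if c \<le> t then g i else 0) else 0)"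
    by (intro sum.cong refl) auto
  also have "\<dots> = (if c \<le> t \<and> t - c < n then g (t - c) else 0)"
    by (simp add: sum.delta)
  finally show ?thesis .
qed

lemma P_second: assumes "a \<ge> 1" "a < N" "b \<ge> 1" "b < N"
  shows "P N a b - P N (a - 1) b / 2 - P N (a + 1) b / 2 = (if a = b then 1 else 0)"
proof -
  have N: "real N > 0" using assms by simp
  have am: "real (a - 1) = real a - 1" using assms by simp
  consider "a < b" | "a = b" | "a > b" by linarith
  then show ?thesis
  proof cases
    case 1
    then have "min a b = a" "max a b = b" "min (a-1) b = a - 1" "max (a-1) b = b"
       "min (a+1) b = a+1" "max (a+1) b = b" by auto
    then show ?thesis using assms N 1 am unfolding P_def
      by (simp add: field_simps)
  next
    case 2
    then have "min a b = a" "max a b = b" "min (a-1) b = a - 1" "max (a-1) b = b"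
       "min (a+1) b = b" "max (a+1) b = a+1" by auto
    then show ?thesis using assms N 2 am unfolding P_def
      by (simp add: field_simps)
  next
    case 3
    then have "min a b = b" "max a b = a" "min (a-1) b = b" "max (a-1) b = a-1"
       "min (a+1) b = b" "max (a+1) b = a+1" by auto
    then show ?thesis using assms N 3 am unfolding P_def
      by (simp add: field_simps)
  qed
qed

lemma tri_sum:
  fixes g :: "nat \<Rightarrow> real" and i n :: nat
  shows "(\<Sum>m<n. (if i = m then 1 else if i + 1 = m \<or> m + 1 = i then - 1 / 2 else 0) * g m)
     = (if i < n then g i else 0) - (if 1 \<le> i \<and> i - 1 < n then g (i - 1) / 2 else 0)
       - (if i + 1 < n then g (i + 1) / 2 else 0)"
proof -
  have "(\<Sum>m<n. (if i = m then 1 else if i + 1 = m \<or> m + 1 = i then - 1 / 2 else 0) * g m)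
    = (\<Sum>m<n. (if m + 0 = i then g m else 0) - (if m + 1 = i then g m else 0) / 2
          - (if m + 0 = i + 1 then g m else 0) / 2)"
    by (intro sum.cong refl) auto
  also have "\<dots> = (\<Sum>m<n. if m + 0 = i then g m else 0) - (\<Sum>m<n. if m + 1 = i then g m else 0) / 2
          - (\<Sum>m<n. if m + 0 = i + 1 then g m else 0) / 2"
    by (simp only: sum_subtractf sum_divide_distrib)
  also have "\<dots> = (if i < n then g i else 0) - (if 1 \<le> i \<and> i - 1 < n then g (i - 1) / 2 else 0)
       - (if i + 1 < n then g (i + 1) / 2 else 0)"
    using sum_ind[where n=n and c=0 and t=i and g=g] sum_ind[where n=n and c=1 and t=i and g=g] sum_ind[where n=n and c=0 and t="i+1" and g=g] by simp
  finally show ?thesis .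
qed

definition Pm :: "nat \<Rightarrow> real mat" where
  "Pm N = mat (N - 1) (N - 1) (\<lambda>(i, j). P N (i + 1) (j + 1))"

lemma P_sym: "P N a b = P N b a"
  unfolding P_def by (simp add: min.commute max.commute)
lemma P_0[simp]: "P N 0 b = 0" unfolding P_def by simp
lemma P_N[simp]: "b \<le> N \<Longrightarrow> P N N b = 0" unfolding P_def by (simp add: max_def)

lemma RP_entry: assumes "N \<ge> 2" "i < N - 1" "j < N - 1"
  shows "(\<Sum>m<N - 1. (if i = m then 1 else if i + 1 = m \<or> m + 1 = i then - 1 / 2 else 0) * P N (m + 1) (j + 1))
     = (if i = j then 1 else 0)"
proof -
  have "(\<Sum>m<N - 1. (if i = m then 1 else if i + 1 = m \<or> m + 1 = i then - 1 / 2 else 0) * P N (m + 1) (j + 1))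
     = P N (i + 1) (j + 1) - P N (i + 1 - 1) (j + 1) / 2 - P N (i + 1 + 1) (j + 1) / 2"
  proof -
    have z: "\<not> i+1 < N-1 \<Longrightarrow> P N (i+1+1) (j+1) = 0" using assms by (subgoal_tac "i+1+1 = N") auto
    show ?thesis unfolding tri_sum using assms z by (cases i) auto
  qed
  also have "\<dots> = (if i = j then 1 else 0)"
    using P_second[of "i+1" N "j+1"] assms by auto
  finally show ?thesis .
qed

lemma R_Pm: assumes "N \<ge> 2" shows "Rmat N * Pm N = 1\<^sub>m (N - 1)"
proof (rule eq_matI)
  fix i j assume ij: "i < dim_row (1\<^sub>m (N - 1) :: real mat)" "j < dim_col (1\<^sub>m (N - 1) :: real mat)"
  then have "(Rmat N * Pm N) $$ (i, j) = (\<Sum>m<N - 1. (if i = m then 1 else if i + 1 = m \<or> m + 1 = i then - 1 / 2 else 0) * P N (m + 1) (j + 1))"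
    by (simp add: Rmat_def Pm_def scalar_prod_def lessThan_atLeast0)
  also have "\<dots> = (if i = j then 1 else 0)" using RP_entry assms ij by simp
  finally show "(Rmat N * Pm N) $$ (i, j) = 1\<^sub>m (N - 1) $$ (i, j)" using ij by simp
qed (auto simp: Rmat_def Pm_def)

lemma Pm_R: assumes "N \<ge> 2" shows "Pm N * Rmat N = 1\<^sub>m (N - 1)"
proof (rule eq_matI)
  fix i j assume ij: "i < dim_row (1\<^sub>m (N - 1) :: real mat)" "j < dim_col (1\<^sub>m (N - 1) :: real mat)"
  then have "(Pm N * Rmat N) $$ (i, j) = (\<Sum>m<N - 1. (if j = m then 1 else if j + 1 = m \<or> m + 1 = j then - 1 / 2 else 0) * P N (m + 1) (i + 1))"
    by (auto simp: Rmat_def Pm_def scalar_prod_def lessThan_atLeast0 P_sym mult.commute intro!: sum.cong)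
  also have "\<dots> = (if i = j then 1 else 0)" using RP_entry assms ij by auto
  finally show "(Pm N * Rmat N) $$ (i, j) = 1\<^sub>m (N - 1) $$ (i, j)" using ij by simp
qed (auto simp: Rmat_def Pm_def)

lemma Rinv_eq: assumes "N \<ge> 2" shows "Rinv N = Pm N"
proof -
  have Rc: "Rmat N \<in> carrier_mat (N - 1) (N - 1)" by (simp add: Rmat_def)
  have Pc: "Pm N \<in> carrier_mat (N - 1) (N - 1)" by (simp add: Pm_def)
  have U: "Rmat N \<in> Units (ring_mat TYPE(real) (N - 1) ())"
    using R_Pm[OF assms] Pm_R[OF assms] Rc Pc by (auto simp: Units_def ring_mat_def)
  have "mat_inverse (Rmat N) \<noteq> None"
  proof
    assume "mat_inverse (Rmat N) = None"
    from mat_inverse(1)[OF Rc this] have "Rmat N \<notin> Units (ring_mat TYPE(real) (N - 1) ())" .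
    with U show False by simp
  qed
  then obtain B where B: "mat_inverse (Rmat N) = Some B" by auto
  then have B1: "B * Rmat N = 1\<^sub>m (N - 1)" and Bc: "B \<in> carrier_mat (N - 1) (N - 1)"
    using mat_inverse(2)[OF Rc] by auto
  have "B = B * (Rmat N * Pm N)" using R_Pm[OF assms] Bc by simp
  also have "\<dots> = (B * Rmat N) * Pm N" using Bc Rc Pc by (simp add: assoc_mult_mat)
  also have "\<dots> = Pm N" using B1 Pc by simp
  finally show ?thesis using B by (simp add: Rinv_def)
qed

definition d :: "nat \<Rightarrow> nat \<Rightarrow> real" where
  "d t i = (if i + 2 = t then 1 else 0) - (if i + 1 = t then 1 else 0)"

lemma A_decomp: assumes "i < N - 1" "j < N - 1"
  shows "Amat N \<sigma> $$ (i, j) = (\<Sum>t\<in>{1..N}. (\<sigma> t)\<^sup>2 * d t i * d t j)"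
proof -
  have "(\<Sum>t\<in>{1..N}. (\<sigma> t)\<^sup>2 * d t i * d t j) = (\<Sum>t\<in>{i+1, i+2}. (\<sigma> t)\<^sup>2 * d t i * d t j)"
    using assms by (intro sum.mono_neutral_right) (auto simp: d_def)
  also have "\<dots> = (\<sigma> (i+1))\<^sup>2 * d (i+1) i * d (i+1) j + (\<sigma> (i+2))\<^sup>2 * d (i+2) i * d (i+2) j"
    by simp
  also have "\<dots> = Amat N \<sigma> $$ (i, j)"
    using assms by (auto simp: d_def Amat_def)
  finally show ?thesis by simp
qed

lemma triple:
  fixes a b :: "nat \<Rightarrow> real" and f :: "nat \<Rightarrow> real" and dd :: "nat \<Rightarrow> nat \<Rightarrow> real"
  shows "(\<Sum>m\<in>M. (\<Sum>i\<in>I. a i * (\<Sum>t\<in>T. f t * dd t i * dd t m)) * b m)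
       = (\<Sum>t\<in>T. f t * (\<Sum>i\<in>I. a i * dd t i) * (\<Sum>m\<in>M. dd t m * b m))"
proof -
  have "(\<Sum>m\<in>M. (\<Sum>i\<in>I. a i * (\<Sum>t\<in>T. f t * dd t i * dd t m)) * b m)
      = (\<Sum>m\<in>M. \<Sum>i\<in>I. \<Sum>t\<in>T. f t * a i * dd t i * dd t m * b m)"
    by (simp add: sum_distrib_left sum_distrib_right mult_ac)
  also have "\<dots> = (\<Sum>m\<in>M. \<Sum>t\<in>T. \<Sum>i\<in>I. f t * a i * dd t i * dd t m * b m)"
    by (rule sum.cong[OF refl], rule sum.swap)
  also have "\<dots> = (\<Sum>t\<in>T. \<Sum>m\<in>M. \<Sum>i\<in>I. f t * a i * dd t i * dd t m * b m)"
    by (rule sum.swap)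
  also have "\<dots> = (\<Sum>t\<in>T. \<Sum>i\<in>I. \<Sum>m\<in>M. f t * a i * dd t i * dd t m * b m)"
    by (rule sum.cong[OF refl], rule sum.swap)
  also have "\<dots> = (\<Sum>t\<in>T. f t * (\<Sum>i\<in>I. a i * dd t i) * (\<Sum>m\<in>M. dd t m * b m))"
    by (simp add: sum_distrib_left sum_distrib_right mult_ac)
  finally show ?thesis .
qed

lemma triple2:
  fixes a :: "nat \<Rightarrow> nat \<Rightarrow> real" and f :: "nat \<Rightarrow> real" and dd :: "nat \<Rightarrow> nat \<Rightarrow> real"
  shows "(\<Sum>i\<in>I. \<Sum>m\<in>M. a i m * (\<Sum>t\<in>T. f t * dd t m * dd t i))
       = (\<Sum>t\<in>T. f t * (\<Sum>i\<in>I. dd t i * (\<Sum>m\<in>M. a i m * dd t m)))"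
proof -
  have "(\<Sum>i\<in>I. \<Sum>m\<in>M. a i m * (\<Sum>t\<in>T. f t * dd t m * dd t i))
      = (\<Sum>i\<in>I. \<Sum>m\<in>M. \<Sum>t\<in>T. f t * dd t i * a i m * dd t m)"
    by (simp add: sum_distrib_left sum_distrib_right mult_ac)
  also have "\<dots> = (\<Sum>i\<in>I. \<Sum>t\<in>T. \<Sum>m\<in>M. f t * dd t i * a i m * dd t m)"
    by (rule sum.cong[OF refl], rule sum.swap)
  also have "\<dots> = (\<Sum>t\<in>T. \<Sum>i\<in>I. \<Sum>m\<in>M. f t * dd t i * a i m * dd t m)"
    by (rule sum.swap)
  also have "\<dots> = (\<Sum>t\<in>T. f t * (\<Sum>i\<in>I. dd t i * (\<Sum>m\<in>M. a i m * dd t m)))"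
    by (simp add: sum_distrib_left sum_distrib_right mult_ac)
  finally show ?thesis .
qed

lemma dsum: assumes "1 \<le> t" "t \<le> N" "g 0 = 0" "g N = 0"
  shows "(\<Sum>i<N - 1. g (i + 1) * d t i) = g (t - 1) - g t"
proof -
  have "(\<Sum>i<N - 1. g (i + 1) * d t i) = (\<Sum>i<N - 1. if i + 2 = t then g (i + 1) else 0) - (\<Sum>i<N - 1. if i + 1 = t then g (i + 1) else 0)"
    unfolding sum_subtractf[symmetric] by (intro sum.cong refl) (simp add: d_def)
  also have "\<dots> = g (t - 1) - g t"
    unfolding sum_ind using assms
    by (cases "t = 1"; cases "t = N") (auto simp: numeral_2_eq_2 Suc_diff_Suc)
  finally show ?thesis .
qed

definition F :: "nat \<Rightarrow> nat \<Rightarrow> nat \<Rightarrow> real" where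
  "F N a t = P N a (t - 1) - P N a t"

lemma F_closed: assumes "a \<le> N" "1 \<le> t" "t \<le> N"
  shows "F N a t = (if t \<le> a then - 2 * (real N - real a) / real N else 2 * real a / real N)"
proof (cases "t \<le> a")
  case True
  then have "min a (t-1) = t - 1" "max a (t-1) = a" "min a t = t" "max a t = a" by auto
  then show ?thesis using True assms unfolding F_def P_def by (simp add: of_nat_diff field_simps)
next
  case False
  then have "min a (t-1) = a" "max a (t-1) = t - 1" "min a t = a" "max a t = t" by auto
  then show ?thesis using False assms unfolding F_def P_def by (simp add: of_nat_diff field_simps)
qed

lemma P_0'[simp]: "P N a 0 = 0" unfolding P_def by simp
lemma P_N'[simp]: "a \<le> N \<Longrightarrow> P N a N = 0" unfolding P_def by (simp add: max_def)
lemma dim_Amat[simp]: "dim_row (Amat N \<sigma>) = N - 1" "dim_col (Amat N \<sigma>) = N - 1"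
  by (simp_all add: Amat_def)
lemma dim_Pm[simp]: "dim_row (Pm N) = N - 1" "dim_col (Pm N) = N - 1"
  by (simp_all add: Pm_def)

lemma B_entry: assumes "N \<ge> 2" "k < N - 1" "l < N - 1"
  shows "(Pm N * Amat N \<sigma> * Pm N) $$ (k, l) = (\<Sum>t\<in>{1..N}. (\<sigma> t)\<^sup>2 * F N (k+1) t * F N (l+1) t)"
proof -
  have "(Pm N * Amat N \<sigma> * Pm N) $$ (k, l) = (\<Sum>m<N-1. (\<Sum>i<N-1. P N (k+1) (i+1) * Amat N \<sigma> $$ (i,m)) * P N (m+1) (l+1))"
    using assms by (simp add: Pm_def scalar_prod_def lessThan_atLeast0)
  also have "\<dots> = (\<Sum>m<N-1. (\<Sum>i<N-1. P N (k+1) (i+1) * (\<Sum>t\<in>{1..N}. (\<sigma> t)\<^sup>2 * d t i * d t m)) * P N (m+1) (l+1))"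
    by (intro sum.cong refl) (simp add: A_decomp)
  also have "\<dots> = (\<Sum>t\<in>{1..N}. (\<sigma> t)\<^sup>2 * (\<Sum>i<N-1. P N (k+1) (i+1) * d t i) * (\<Sum>m<N-1. d t m * P N (m+1) (l+1)))"
    by (rule triple)
  also have "\<dots> = (\<Sum>t\<in>{1..N}. (\<sigma> t)\<^sup>2 * F N (k+1) t * F N (l+1) t)"
  proof (intro sum.cong refl)
    fix t assume t: "t \<in> {1..N}"
    have 1: "(\<Sum>i<N-1. P N (k+1) (i+1) * d t i) = F N (k+1) t"
      unfolding F_def using t assms by (intro dsum) auto
    have "(\<Sum>m<N-1. d t m * P N (m+1) (l+1)) = (\<Sum>m<N-1. P N (l+1) (m+1) * d t m)"
      by (intro sum.cong refl) (simp add: P_sym mult.commute)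
    also have "\<dots> = F N (l+1) t"
      unfolding F_def using t assms by (intro dsum) auto
    finally show "(\<sigma> t)\<^sup>2 * (\<Sum>i<N-1. P N (k+1) (i+1) * d t i) * (\<Sum>m<N-1. d t m * P N (m+1) (l+1)) = (\<sigma> t)\<^sup>2 * F N (k+1) t * F N (l+1) t"
      using 1 by simp
  qed
  finally show ?thesis .
qed

lemma trace_eq: assumes "N \<ge> 2"
  shows "mat_trace (Pm N * Amat N \<sigma>) = 2 * (real N - 1) / real N * (\<Sum>t\<in>{1..N}. (\<sigma> t)\<^sup>2)"
proof -
  have "mat_trace (Pm N * Amat N \<sigma>) = (\<Sum>i<N-1. \<Sum>m<N-1. P N (i+1) (m+1) * Amat N \<sigma> $$ (m,i))"
    unfolding mat_trace_def using assms by (simp add: Pm_def scalar_prod_def lessThan_atLeast0)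
  also have "\<dots> = (\<Sum>i<N-1. \<Sum>m<N-1. P N (i+1) (m+1) * (\<Sum>t\<in>{1..N}. (\<sigma> t)\<^sup>2 * d t m * d t i))"
    by (intro sum.cong refl) (simp add: A_decomp)
  also have "\<dots> = (\<Sum>t\<in>{1..N}. (\<sigma> t)\<^sup>2 * (\<Sum>i<N-1. d t i * (\<Sum>m<N-1. P N (i+1) (m+1) * d t m)))"
    by (rule triple2)
  also have "\<dots> = (\<Sum>t\<in>{1..N}. (\<sigma> t)\<^sup>2 * (2 * (real N - 1) / real N))"
  proof (intro sum.cong refl)
    fix t assume t: "t \<in> {1..N}"
    have "(\<Sum>i<N-1. d t i * (\<Sum>m<N-1. P N (i+1) (m+1) * d t m)) = (\<Sum>i<N-1. F N (i+1) t * d t i)"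
    proof (intro sum.cong refl)
      fix i assume "i \<in> {..<N-1}"
      then have "(\<Sum>m<N-1. P N (i+1) (m+1) * d t m) = F N (i+1) t"
        unfolding F_def using t assms by (intro dsum) auto
      then show "d t i * (\<Sum>m<N-1. P N (i+1) (m+1) * d t m) = F N (i+1) t * d t i" by simp
    qed
    also have "\<dots> = F N (t - 1) t - F N t t"
      using t by (intro dsum[where g = "\<lambda>a. F N a t"]) (auto simp: F_def)
    also have "\<dots> = 2 * (real N - 1) / real N"
    proof -
      have "\<not> t \<le> t - 1" "t - 1 \<le> N" using t by auto
      moreover have "F N (t-1) t = (if t \<le> t - 1 then - 2 * (real N - real (t-1)) / real N else 2 * real (t-1) / real N)"
        by (rule F_closed) (use t in auto)
      ultimately have a: "F N (t-1) t = 2 * real (t - 1) / real N" by (simp only: if_not_P if_False)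
      have b: "F N t t = - 2 * (real N - real t) / real N" using F_closed[of t N t] t by simp
      show ?thesis unfolding a b using t assms by (simp add: of_nat_diff field_simps)
    qed
    finally show "(\<sigma> t)\<^sup>2 * (\<Sum>i<N-1. d t i * (\<Sum>m<N-1. P N (i+1) (m+1) * d t m)) = (\<sigma> t)\<^sup>2 * (2 * (real N - 1) / real N)"
      by simp
  qed
  also have "\<dots> = 2 * (real N - 1) / real N * (\<Sum>t\<in>{1..N}. (\<sigma> t)\<^sup>2)"
    by (simp only: sum_distrib_right mult.commute)
  finally show ?thesis .
qed

lemma sum_split3: assumes "a \<le> b" "b \<le> c"
  shows "sum f {a+1..c} = sum f {a+1..b} + sum (f :: nat \<Rightarrow> real) {b+1..c}"
proof -
  have "{a+1..c} = {a+1..b} \<union> {b+1..c}" using assms by auto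
  then show ?thesis by (simp add: sum.union_disjoint)
qed

lemma ckl_formula:
  assumes N: "N \<ge> 2" and kl: "1 \<le> k" "k \<le> l" "l \<le> N - 1"
  shows "ckl N k l \<sigma> = 2 * (real N - 1) / real N * ((\<Sum>t\<in>{1..k}. (\<sigma> t)\<^sup>2) + (\<Sum>t\<in>{k+1..l}. (\<sigma> t)\<^sup>2) + (\<Sum>t\<in>{l+1..N}. (\<sigma> t)\<^sup>2))
     - 4 / real N * ((real N - real k) / real k * (\<Sum>t\<in>{1..k}. (\<sigma> t)\<^sup>2) - (\<Sum>t\<in>{k+1..l}. (\<sigma> t)\<^sup>2)
          + real l / (real N - real l) * (\<Sum>t\<in>{l+1..N}. (\<sigma> t)\<^sup>2))"
proof -
  define S1 where "S1 = (\<Sum>t\<in>{1..k}. (\<sigma> t)\<^sup>2)"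
  define S2 where "S2 = (\<Sum>t\<in>{k+1..l}. (\<sigma> t)\<^sup>2)"
  define S3 where "S3 = (\<Sum>t\<in>{l+1..N}. (\<sigma> t)\<^sup>2)"
  have Npos: "real N > 0" using N by simp
  have lN: "real N - real l > 0" using kl N by simp
  have kpos: "real k > 0" using kl by simp
  have split: "\<And>f. sum f {1..N} = sum f {1..k} + sum f {k+1..l} + sum (f :: nat \<Rightarrow> real) {l+1..N}"
    using sum_split3[of 0 k N] sum_split3[of k l N] kl N by simp
  have tr: "mat_trace (Rinv N * Amat N \<sigma>) = 2 * (real N - 1) / real N * (S1 + S2 + S3)"
    unfolding Rinv_eq[OF N] trace_eq[OF N] S1_def S2_def S3_def split ..
  have rho: "rho N k l = 2 * real k * (real N - real l) / real N"
  proof -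
    have "rho N k l = P N (k - 1 + 1) (l - 1 + 1)"
      unfolding rho_def Rinv_eq[OF N] using kl N by (simp add: Pm_def)
    also have "\<dots> = P N k l" using kl by simp
    also have "\<dots> = 2 * real k * (real N - real l) / real N"
      using kl unfolding P_def by (simp add: min_absorb1 max_absorb2)
    finally show ?thesis .
  qed
  let ?f = "\<lambda>t. (\<sigma> t)\<^sup>2 * F N k t * F N l t"
  have B0: "(Rinv N * Amat N \<sigma> * Rinv N) $$ (k - 1, l - 1) = sum ?f {1..N}"
    unfolding Rinv_eq[OF N] using B_entry[OF N, of "k-1" "l-1" \<sigma>] kl N by simp
  have p1: "sum ?f {1..k} = 4 * (real N - real k) * (real N - real l) / (real N)^2 * S1"
    unfolding S1_def sum_distrib_left
    by (intro sum.cong refl) (use kl N in \<open>auto simp: F_closed power2_eq_square field_simps\<close>)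
  have p2: "sum ?f {k+1..l} = - 4 * real k * (real N - real l) / (real N)^2 * S2"
    unfolding S2_def sum_distrib_left
    by (intro sum.cong refl) (use kl N in \<open>auto simp: F_closed power2_eq_square field_simps\<close>)
  have p3: "sum ?f {l+1..N} = 4 * real k * real l / (real N)^2 * S3"
    unfolding S3_def sum_distrib_left
    by (intro sum.cong refl) (use kl N in \<open>auto simp: F_closed power2_eq_square field_simps\<close>)
  have B: "(Rinv N * Amat N \<sigma> * Rinv N) $$ (k - 1, l - 1)
     = 4 * (real N - real k) * (real N - real l) / (real N)^2 * S1 - 4 * real k * (real N - real l) / (real N)^2 * S2
       + 4 * real k * real l / (real N)^2 * S3"
    unfolding B0 split p1 p2 p3 by simp
  show ?thesis
    unfolding ckl_def tr rho B S1_def[symmetric] S2_def[symmetric] S3_def[symmetric]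
    using Npos lN kpos by (simp add: field_simps power2_eq_square)
qed

theorem lemma4p6:
  fixes N :: nat and \<sigma> :: "nat \<Rightarrow> real"
  assumes "N \<ge> 2"
    and "\<And>i. 1 \<le> i \<Longrightarrow> i \<le> N \<Longrightarrow> \<sigma> i > 0"
  shows "(\<forall>k l. 2 \<le> k \<and> k \<le> l \<and> l \<le> N - 2 \<longrightarrow> ckl N k l \<sigma> \<ge> 0)
       \<and> (\<forall>l. 1 \<le> l \<and> l \<le> N - 1 \<longrightarrow> ckl N 1 l \<sigma> = cl N l \<sigma>)
       \<and> (\<forall>k. 1 \<le> k \<and> k \<le> N - 1 \<longrightarrow> ckl N k (N - 1) \<sigma> = cl N (N - k) (rev_vec N \<sigma>))"
proof (intro conjI allI impI)
  note N = assms(1)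
  have Npos: "real N > 0" using N by simp
  fix k l assume kl: "2 \<le> k \<and> k \<le> l \<and> l \<le> N - 2"
  define S1 where "S1 = (\<Sum>t\<in>{1..k}. (\<sigma> t)\<^sup>2)"
  define S2 where "S2 = (\<Sum>t\<in>{k+1..l}. (\<sigma> t)\<^sup>2)"
  define S3 where "S3 = (\<Sum>t\<in>{l+1..N}. (\<sigma> t)\<^sup>2)"
  have S: "S1 \<ge> 0" "S2 \<ge> 0" "S3 \<ge> 0" unfolding S1_def S2_def S3_def by (auto intro: sum_nonneg)
  have kpos: "real k > 0" and lN: "real N - real l \<ge> 2" and k2: "real k \<ge> 2" and lN2: "real l \<le> real N - 2"
    using kl N by auto
  have h1: "1 \<le> k" and h2: "k \<le> l" and h3: "l \<le> N - 1" using kl by auto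
  have c: "ckl N k l \<sigma> = 2 / real N * ((real N - 1) - 2 * (real N - real k) / real k) * S1 + 2 * (real N + 1) / real N * S2
     + 2 / real N * ((real N - 1) - 2 * real l / (real N - real l)) * S3"
    unfolding ckl_formula[OF N, of k l, OF h1 h2 h3] S1_def[symmetric] S2_def[symmetric] S3_def[symmetric]
    using kl Npos kpos lN by (simp add: field_simps)
  have c1: "(real N - 1) - 2 * (real N - real k) / real k \<ge> 0"
  proof -
    have "2 * (real N - real k) \<le> (real N - 1) * real k"
      using mult_left_mono[OF k2, of "real N - 1"] kl N by auto
    then show ?thesis using kpos by (simp add: field_simps)
  qed
  have c3: "(real N - 1) - 2 * real l / (real N - real l) \<ge> 0"
  proof -
    have "2 * real l \<le> (real N - 1) * (real N - real l)"
      using mult_left_mono[OF lN, of "real N - 1"] lN2 N by auto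
    then show ?thesis using lN by (simp add: field_simps)
  qed
  show "ckl N k l \<sigma> \<ge> 0" unfolding c
    using c1 c3 S Npos by (intro add_nonneg_nonneg mult_nonneg_nonneg) auto
next
  note N = assms(1)
  have Npos: "real N > 0" using N by simp
  fix l assume l: "1 \<le> l \<and> l \<le> N - 1"
  have lN: "real N - real l > 0" using l N by auto
  have h2: "1 \<le> l" and h3: "l \<le> N - 1" using l by auto
  show "ckl N 1 l \<sigma> = cl N l \<sigma>"
    unfolding ckl_formula[OF N, of 1 l, OF order.refl h2 h3] cl_def using l Npos lN by (simp add: field_simps numeral_2_eq_2)
next
  note N = assms(1)
  have Npos: "real N > 0" using N by simp
  fix k assume k: "1 \<le> k \<and> k \<le> N - 1"
  have kpos: "real k > 0" using k by simp
  have h1: "1 \<le> k" and h2: "k \<le> N - 1" using k by auto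
  have r1: "(\<Sum>p = 2..N - k. (rev_vec N \<sigma> p)\<^sup>2) = (\<Sum>t\<in>{k+1..N-1}. (\<sigma> t)\<^sup>2)"
    unfolding rev_vec_def
    by (rule sum.reindex_bij_witness[where i = "\<lambda>t. N + 1 - t" and j = "\<lambda>p. N + 1 - p"]) (use k in auto)
  have r2: "(\<Sum>p = N - k + 1..N. (rev_vec N \<sigma> p)\<^sup>2) = (\<Sum>t\<in>{1..k}. (\<sigma> t)\<^sup>2)"
    unfolding rev_vec_def
    by (rule sum.reindex_bij_witness[where i = "\<lambda>t. N + 1 - t" and j = "\<lambda>p. N + 1 - p"]) (use k in auto)
  have r0: "rev_vec N \<sigma> 1 = \<sigma> N" by (simp add: rev_vec_def)
  have s3: "(\<Sum>t\<in>{N - 1 + 1..N}. (\<sigma> t)\<^sup>2) = (\<sigma> N)\<^sup>2" using N by simp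
  have NK: "real (N - k) = real N - real k" using k by (intro of_nat_diff) arith
  show "ckl N k (N - 1) \<sigma> = cl N (N - k) (rev_vec N \<sigma>)"
    unfolding ckl_formula[OF N, of k "N-1", OF h1 h2 order.refl] cl_def r0 r1 r2 s3 NK using k Npos kpos N
    by (simp add: of_nat_diff field_simps)
qed

end
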